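(* Let $n\ge3$. For each integer $k\ge1$ let \[ S^{n-1}_k=\{x\in\mathbb{R}^n:\|x-c_k\|=r_k\},\qquad r_k=\tfrac1k,\quad c_k=\tfrac1k e_1=\left(\tfrac1k,0,\dots,0\right), \] and let $E_n=\bigcup_{k=1}^\infty S^{n-1}_k$. If $f\in C^\infty(\mathbb{R}^n)$ vanishes on $E_n$, then $f$ is flat at the origin: $D^\alpha f(0)=0$ for all multi-indices $\alpha$.
   Context: $\|\cdot\|$ is the Euclidean norm on $\mathbb{R}^n$ and $e_1$ is the first standard basis vector. *)

theory Defs
  imports "HOL-Analysis.Analysis"
begin

definition partial_deriv :: "'n::finite \<Rightarrow> (real^'n \<Rightarrow> real) \<Rightarrow> real^'n \<Rightarrow> real" where
  "partial_deriv i f x = deriv (\<lambda>t. f (x + t *\<^sub>R axis i 1)) 0"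

fun iter_partial :: "'n::finite list \<Rightarrow> (real^'n \<Rightarrow> real) \<Rightarrow> real^'n \<Rightarrow> real" where
  "iter_partial [] f = f"
| "iter_partial (i # is) f = partial_deriv i (iter_partial is f)"

definition smooth :: "(real^'n::finite \<Rightarrow> real) \<Rightarrow> bool" where
  "smooth f \<longleftrightarrow> (\<forall>is. continuous_on UNIV (iter_partial is f) \<and>
      (\<forall>i x. (\<lambda>t. iter_partial is f (x + t *\<^sub>R axis i 1)) differentiable (at 0)))"

definition E_set :: "'n::finite \<Rightarrow> (real^'n) set" where
  "E_set j = (\<Union>k\<in>{1::nat..}. sphere ((1 / real k) *\<^sub>R axis j 1) (1 / real k))"

end

theory Submission
  imports Defs
begin

lemma iter_partial_snoc:
  "iter_partial is (partial_deriv i g) = iter_partial (is @ [i]) g"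
  by (induction "is") auto

lemma smooth_partial: "smooth g \<Longrightarrow> smooth (partial_deriv i g)"
  unfolding smooth_def iter_partial_snoc by blast

lemma smooth_iter: "smooth g \<Longrightarrow> smooth (iter_partial is g)"
  by (induction "is") (auto intro: smooth_partial)

lemma smooth_cont: "smooth g \<Longrightarrow> continuous_on UNIV g"
  unfolding smooth_def by (metis iter_partial.simps(1))

lemma smooth_line_deriv:
  assumes "smooth g"
  shows "((\<lambda>t. g (y + t *\<^sub>R axis i 1)) has_real_derivative partial_deriv i g (y + t0 *\<^sub>R axis i 1)) (at t0)"
proof -
  let ?x = "y + t0 *\<^sub>R axis i 1"
  have "(\<lambda>t. g (?x + t *\<^sub>R axis i 1)) differentiable (at 0)"
    using assms unfolding smooth_def by (metis iter_partial.simps(1))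
  then have "((\<lambda>t. g (?x + t *\<^sub>R axis i 1)) has_real_derivative partial_deriv i g ?x) (at 0)"
    unfolding partial_deriv_def by (simp add: DERIV_deriv_iff_real_differentiable)
  then have "((\<lambda>t. g (y + (t + t0) *\<^sub>R axis i 1)) has_real_derivative partial_deriv i g ?x) (at 0)"
    by (simp add: algebra_simps scaleR_add_left)
  then show ?thesis
    using DERIV_shift[of "\<lambda>t. g (y + t *\<^sub>R axis i 1)" _ 0 t0] by simp
qed

lemma smooth_sum_partial:
  assumes "finite I" "\<And>l. l \<in> I \<Longrightarrow> smooth (A l)"
  shows "partial_deriv i (\<lambda>y. \<Sum>l\<in>I. c l * A l y) = (\<lambda>y. \<Sum>l\<in>I. c l * partial_deriv i (A l) y)"
proof
  fix y
  have "((\<lambda>t. \<Sum>l\<in>I. c l * A l (y + t *\<^sub>R axis i 1)) has_real_derivative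
        (\<Sum>l\<in>I. c l * partial_deriv i (A l) (y + 0 *\<^sub>R axis i 1))) (at 0)"
    by (intro DERIV_sum DERIV_cmult smooth_line_deriv assms)
  then show "partial_deriv i (\<lambda>y. \<Sum>l\<in>I. c l * A l y) y = (\<Sum>l\<in>I. c l * partial_deriv i (A l) y)"
    unfolding partial_deriv_def by (simp add: DERIV_imp_deriv)
qed

lemma iter_partial_sum:
  assumes "finite I" "\<And>l. l \<in> I \<Longrightarrow> smooth (A l)"
  shows "iter_partial is (\<lambda>y. \<Sum>l\<in>I. c l * A l y) = (\<lambda>y. \<Sum>l\<in>I. c l * iter_partial is (A l) y)"
proof (induction "is")
  case Nil then show ?case by simp
next
  case (Cons i "is")
  show ?case using smooth_sum_partial[OF assms(1), of "\<lambda>l. iter_partial is (A l)"]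
    by (simp add: Cons smooth_iter assms(2))
qed

lemma smooth_sum:
  assumes "finite I" "\<And>l. l \<in> I \<Longrightarrow> smooth (A l)"
  shows "smooth (\<lambda>y. \<Sum>l\<in>I. c l * A l y)"
  unfolding smooth_def
proof (intro allI conjI)
  fix "is" i x
  have e: "iter_partial is (\<lambda>y. \<Sum>l\<in>I. c l * A l y) = (\<lambda>y. \<Sum>l\<in>I. c l * iter_partial is (A l) y)"
    by (rule iter_partial_sum[OF assms])
  show "continuous_on UNIV (iter_partial is (\<lambda>y. \<Sum>l\<in>I. c l * A l y))"
    unfolding e
    by (intro continuous_on_sum continuous_on_mult_left) (auto intro: smooth_cont smooth_iter assms)
  have "((\<lambda>t. \<Sum>l\<in>I. c l * iter_partial is (A l) (x + t *\<^sub>R axis i 1)) has_real_derivative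
        (\<Sum>l\<in>I. c l * partial_deriv i (iter_partial is (A l)) (x + 0 *\<^sub>R axis i 1))) (at 0)"
    by (intro DERIV_sum DERIV_cmult smooth_line_deriv smooth_iter assms)
  then show "(\<lambda>t. iter_partial is (\<lambda>y. \<Sum>l\<in>I. c l * A l y) (x + t *\<^sub>R axis i 1)) differentiable (at 0)"
    unfolding e using real_differentiable_def by blast
qed

lemma lin2_as_sum: "(\<lambda>y. A y + (s::real) * B y) = (\<lambda>y. \<Sum>l\<in>{0::nat,1}. (if l = 0 then 1 else s) * (if l = 0 then A else B) y)"
  by (simp add: fun_eq_iff)

lemma smooth_lin2: "smooth A \<Longrightarrow> smooth B \<Longrightarrow> smooth (\<lambda>y. A y + s * B y)"
  unfolding lin2_as_sum by (rule smooth_sum) auto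

lemma partial_lin2: "smooth A \<Longrightarrow> smooth B \<Longrightarrow>
  partial_deriv i (\<lambda>y. A y + s * B y) = (\<lambda>y. partial_deriv i A y + s * partial_deriv i B y)"
  unfolding lin2_as_sum by (subst smooth_sum_partial) auto

definition Dv :: "real^'n \<Rightarrow> (real^'n \<Rightarrow> real) \<Rightarrow> real^'n \<Rightarrow> real" where
  "Dv v g = (\<lambda>x. \<Sum>i\<in>UNIV. v$i * partial_deriv i g x)"

lemma smooth_Dv: "smooth g \<Longrightarrow> smooth (Dv v g)"
  unfolding Dv_def by (rule smooth_sum) (auto intro: smooth_partial)

lemma smooth_Dv_pow: "smooth g \<Longrightarrow> smooth ((Dv v ^^ k) g)"
  by (induction k) (auto intro: smooth_Dv)

lemma Dv_lin2: "smooth A \<Longrightarrow> smooth B \<Longrightarrow> Dv w (\<lambda>y. A y + s * B y) = (\<lambda>y. Dv w A y + s * Dv w B y)"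
  unfolding Dv_def by (simp add: partial_lin2 algebra_simps sum.distrib sum_distrib_left)

lemma Dv_pow_lin2: "smooth A \<Longrightarrow> smooth B \<Longrightarrow>
   (Dv w ^^ k) (\<lambda>y. A y + s * B y) = (\<lambda>y. (Dv w ^^ k) A y + s * (Dv w ^^ k) B y)"
proof (induction k arbitrary: A B)
  case 0 then show ?case by simp
next
  case (Suc k)
  have "(Dv w ^^ Suc k) (\<lambda>y. A y + s * B y) = (Dv w ^^ k) (Dv w (\<lambda>y. A y + s * B y))"
    by (simp only: funpow_Suc_right comp_def)
  also have "\<dots> = (Dv w ^^ k) (\<lambda>y. Dv w A y + s * Dv w B y)" using Suc by (simp add: Dv_lin2)
  also have "\<dots> = (\<lambda>y. (Dv w ^^ k) (Dv w A) y + s * (Dv w ^^ k) (Dv w B) y)"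
    using Suc by (simp add: smooth_Dv)
  finally show ?case by (simp only: funpow_Suc_right comp_def)
qed

lemma Dv_shift: "Dv (u + s *\<^sub>R axis i 1) g = (\<lambda>y. Dv u g y + s * partial_deriv i g y)"
proof
  fix y
  have "Dv (u + s *\<^sub>R axis i 1) g y = (\<Sum>l\<in>UNIV. u$l * partial_deriv l g y + (if l = i then s * partial_deriv i g y else 0))"
    unfolding Dv_def by (intro sum.cong) (auto simp: axis_def algebra_simps)
  also have "\<dots> = Dv u g y + s * partial_deriv i g y"
    unfolding Dv_def by (simp add: sum.distrib)
  finally show "Dv (u + s *\<^sub>R axis i 1) g y = Dv u g y + s * partial_deriv i g y" .
qed

lemma mvt_sign:
  assumes "\<And>t. (\<psi> has_real_derivative \<psi>' t) (at t)"
  shows "\<exists>\<xi>. \<bar>\<xi>\<bar> \<le> \<bar>a\<bar> \<and> \<psi> a - \<psi> 0 = a * \<psi>' \<xi>"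
proof (cases a "0::real" rule: linorder_cases)
  case less
  obtain z where "a < z" "z < 0" "\<psi> 0 - \<psi> a = (0 - a) * \<psi>' z"
    using MVT2[OF less, of \<psi> \<psi>'] assms by blast
  then show ?thesis by (intro exI[of _ z]) (auto simp: algebra_simps)
next
  case equal then show ?thesis by auto
next
  case greater
  obtain z where "0 < z" "z < a" "\<psi> a - \<psi> 0 = (a - 0) * \<psi>' z"
    using MVT2[OF greater, of \<psi> \<psi>'] assms by blast
  then show ?thesis by (intro exI[of _ z]) auto
qed

lemma norm_le_compwise:
  fixes v h :: "real^'n"
  assumes "\<And>m. \<bar>v$m\<bar> \<le> \<bar>h$m\<bar>"
  shows "norm v \<le> norm h"
  unfolding norm_vec_def by (rule L2_set_mono) (use assms in auto)

lemma frechet: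
  fixes g :: "real^'n \<Rightarrow> real"
  assumes sg: "smooth g"
  shows "(g has_derivative (\<lambda>h. \<Sum>i\<in>UNIV. h$i * partial_deriv i g x)) (at x)"
  unfolding has_derivative_at_alt
proof (intro conjI allI impI)
  show "bounded_linear (\<lambda>h. \<Sum>i\<in>UNIV. h$i * partial_deriv i g x)"
    by (intro bounded_linear_sum bounded_linear_mult_const bounded_linear_vec_nth)
  fix e :: real assume "e > 0"
  define \<epsilon> where "\<epsilon> = e / real CARD('n)"
  have "\<epsilon> > 0" using \<open>e > 0\<close> by (simp add: \<epsilon>_def)
  have "continuous_on UNIV (\<lambda>y. \<Sum>i\<in>UNIV. \<bar>partial_deriv i g y - partial_deriv i g x\<bar>)"
    using smooth_cont[OF smooth_partial[OF sg]] by (intro continuous_intros) auto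
  then have "isCont (\<lambda>y. \<Sum>i\<in>UNIV. \<bar>partial_deriv i g y - partial_deriv i g x\<bar>) x"
    by (simp add: continuous_on_eq_continuous_at)
  then obtain d where "d > 0" and d: "\<And>y. dist y x < d \<Longrightarrow>
      dist (\<Sum>i\<in>UNIV. \<bar>partial_deriv i g y - partial_deriv i g x\<bar>) (\<Sum>i\<in>UNIV. \<bar>partial_deriv i g x - partial_deriv i g x\<bar>) < \<epsilon>"
    unfolding continuous_at_eps_delta using \<open>\<epsilon> > 0\<close> by blast
  have dd: "\<bar>partial_deriv i g y - partial_deriv i g x\<bar> \<le> \<epsilon>" if "norm (y - x) < d" for y i
  proof -
    have "\<bar>partial_deriv i g y - partial_deriv i g x\<bar> \<le> (\<Sum>i\<in>UNIV. \<bar>partial_deriv i g y - partial_deriv i g x\<bar>)"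
      by (rule member_le_sum) auto
    also have "\<dots> < \<epsilon>" using d[of y] that by (simp add: dist_norm)
    finally show ?thesis by simp
  qed
  show "\<exists>d>0. \<forall>y. norm (y - x) < d \<longrightarrow> norm (g y - g x - (\<Sum>i\<in>UNIV. (y - x)$i * partial_deriv i g x)) \<le> e * norm (y - x)"
  proof (intro exI conjI allI impI)
    show "d > 0" by fact
    fix y assume y: "norm (y - x) < d"
    define h where "h = y - x"
    have key: "\<bar>g (x + (\<Sum>l\<in>I. h$l *\<^sub>R axis l 1)) - g x - (\<Sum>l\<in>I. h$l * partial_deriv l g x)\<bar> \<le> \<epsilon> * (\<Sum>l\<in>I. \<bar>h$l\<bar>)"
      if "finite I" for I
      using that
    proof (induction I rule: finite_induct)
      case empty then show ?case by simp
    next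
      case (insert i I)
      define z where "z = x + (\<Sum>l\<in>I. h$l *\<^sub>R axis l 1)"
      obtain \<xi> where \<xi>: "\<bar>\<xi>\<bar> \<le> \<bar>h$i\<bar>" and
        mv: "g (z + h$i *\<^sub>R axis i 1) - g (z + 0 *\<^sub>R axis i 1) = h$i * partial_deriv i g (z + \<xi> *\<^sub>R axis i 1)"
        using mvt_sign[of "\<lambda>t. g (z + t *\<^sub>R axis i 1)" "\<lambda>t. partial_deriv i g (z + t *\<^sub>R axis i 1)" "h$i"]
          smooth_line_deriv[OF sg] by blast
      have "norm (z + \<xi> *\<^sub>R axis i 1 - x) \<le> norm h"
      proof (rule norm_le_compwise)
        fix m
        show "\<bar>(z + \<xi> *\<^sub>R axis i 1 - x) $ m\<bar> \<le> \<bar>h $ m\<bar>"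
        proof -
          have sc: "(\<Sum>l\<in>I. h $ l * (if m' = l then 1 else 0)) = (if m' \<in> I then h$m' else 0)" for m'
          proof -
            have "(\<Sum>l\<in>I. h $ l * (if m' = l then 1 else 0)) = (\<Sum>l\<in>I. if m' = l then h$m' else 0)"
              by (rule sum.cong) auto
            then show ?thesis using insert(1) by simp
          qed
          show ?thesis
            using \<xi> insert(2) by (auto simp: z_def axis_def sc)
        qed
      qed
      then have "\<bar>partial_deriv i g (z + \<xi> *\<^sub>R axis i 1) - partial_deriv i g x\<bar> \<le> \<epsilon>"
        using dd y h_def by fastforce
      then have A: "\<bar>g (z + h$i *\<^sub>R axis i 1) - g z - h$i * partial_deriv i g x\<bar> \<le> \<bar>h$i\<bar> * \<epsilon>"
        using mv by (simp add: right_diff_distrib[symmetric] abs_mult mult_left_mono)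
      have eq: "x + (\<Sum>l\<in>insert i I. h$l *\<^sub>R axis l 1) = z + h$i *\<^sub>R axis i 1"
        using insert by (simp add: z_def algebra_simps)
      show ?case
        unfolding eq using insert A z_def by (simp add: algebra_simps)
    qed
    have hsum: "x + (\<Sum>l\<in>UNIV. h$l *\<^sub>R axis l 1) = y"
      using basis_expansion[of h] by (simp add: scalar_mult_eq_scaleR h_def)
    have "norm (g y - g x - (\<Sum>i\<in>UNIV. h$i * partial_deriv i g x)) \<le> \<epsilon> * (\<Sum>l\<in>UNIV. \<bar>h$l\<bar>)"
      using key[of UNIV] hsum by simp
    also have "\<dots> \<le> \<epsilon> * (\<Sum>l\<in>(UNIV::'n set). norm h)"
      using \<open>\<epsilon> > 0\<close> by (intro mult_left_mono sum_mono component_le_norm_cart) auto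
    also have "\<dots> = e * norm h" by (simp add: \<epsilon>_def)
    finally show "norm (g y - g x - (\<Sum>i\<in>UNIV. (y - x)$i * partial_deriv i g x)) \<le> e * norm (y - x)"
      by (simp add: h_def)
  qed
qed

lemma chain_line:
  fixes G :: "real^'n \<Rightarrow> real"
  assumes "smooth G"
  shows "((\<lambda>t. G (a + t *\<^sub>R v)) has_real_derivative Dv v G (a + t *\<^sub>R v)) (at t)"
proof -
  have l: "((\<lambda>t. a + t *\<^sub>R v) has_derivative (\<lambda>h. h *\<^sub>R v)) (at t)"
    by (auto intro!: derivative_eq_intros)
  have "((G \<circ> (\<lambda>t. a + t *\<^sub>R v)) has_derivative
      ((\<lambda>h. \<Sum>i\<in>UNIV. h$i * partial_deriv i G (a + t *\<^sub>R v)) \<circ> (\<lambda>h. h *\<^sub>R v))) (at t)"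
    by (rule diff_chain_at[OF l frechet[OF assms]])
  moreover have "((\<lambda>h. \<Sum>i\<in>UNIV. h$i * partial_deriv i G (a + t *\<^sub>R v)) \<circ> (\<lambda>h. h *\<^sub>R v))
      = (*) (Dv v G (a + t *\<^sub>R v))"
    by (auto simp: fun_eq_iff Dv_def sum_distrib_left algebra_simps)
  ultimately show ?thesis
    by (simp add: has_field_derivative_def comp_def)
qed

lemma mixed_mvt:
  fixes g :: "real^'n \<Rightarrow> real"
  assumes sg: "smooth g" and "h > 0"
  shows "\<exists>p. norm (p - x) \<le> 2*h \<and>
    g (x + h *\<^sub>R axis j 1 + h *\<^sub>R axis i 1) - g (x + h *\<^sub>R axis i 1) - g (x + h *\<^sub>R axis j 1) + g x
      = h^2 * partial_deriv j (partial_deriv i g) p"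
proof -
  define \<phi> where "\<phi> t = g (x + h *\<^sub>R axis j 1 + t *\<^sub>R axis i 1) - g (x + t *\<^sub>R axis i 1)" for t
  define \<phi>' where "\<phi>' t = partial_deriv i g (x + h *\<^sub>R axis j 1 + t *\<^sub>R axis i 1) - partial_deriv i g (x + t *\<^sub>R axis i 1)" for t
  have "(\<phi> has_real_derivative \<phi>' t) (at t)" for t
    unfolding \<phi>_def \<phi>'_def by (intro DERIV_diff smooth_line_deriv sg)
  then obtain \<xi> where \<xi>: "0 < \<xi>" "\<xi> < h" "\<phi> h - \<phi> 0 = (h - 0) * \<phi>' \<xi>"
    using MVT2[OF \<open>h > 0\<close>, of \<phi> \<phi>'] by blast
  define \<psi> where "\<psi> s = partial_deriv i g (x + \<xi> *\<^sub>R axis i 1 + s *\<^sub>R axis j 1)" for s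
  have "(\<psi> has_real_derivative partial_deriv j (partial_deriv i g) (x + \<xi> *\<^sub>R axis i 1 + s *\<^sub>R axis j 1)) (at s)" for s
    unfolding \<psi>_def by (intro smooth_line_deriv smooth_partial sg)
  then obtain \<eta> where \<eta>: "0 < \<eta>" "\<eta> < h"
    "\<psi> h - \<psi> 0 = (h - 0) * partial_deriv j (partial_deriv i g) (x + \<xi> *\<^sub>R axis i 1 + \<eta> *\<^sub>R axis j 1)"
    using MVT2[OF \<open>h > 0\<close>, of \<psi> "\<lambda>s. partial_deriv j (partial_deriv i g) (x + \<xi> *\<^sub>R axis i 1 + s *\<^sub>R axis j 1)"] by blast
  have "\<phi>' \<xi> = \<psi> h - \<psi> 0"
    unfolding \<phi>'_def \<psi>_def by (simp add: algebra_simps)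
  have "norm (x + \<xi> *\<^sub>R axis i 1 + \<eta> *\<^sub>R axis j 1 - x) = norm (\<xi> *\<^sub>R (axis i 1::real^'n) + \<eta> *\<^sub>R axis j 1)"
    by (simp add: algebra_simps)
  also have "\<dots> \<le> norm (\<xi> *\<^sub>R (axis i 1::real^'n)) + norm (\<eta> *\<^sub>R (axis j 1::real^'n))"
    by (rule norm_triangle_ineq)
  also have "\<dots> \<le> 2 * h" using \<xi> \<eta> by simp
  finally show ?thesis
    using \<xi>(3) \<eta>(3) \<open>\<phi>' \<xi> = \<psi> h - \<psi> 0\<close>
    by (intro exI[of _ "x + \<xi> *\<^sub>R axis i 1 + \<eta> *\<^sub>R axis j 1"]) (auto simp: \<phi>_def power2_eq_square algebra_simps)
qed

lemma schwarz:
  fixes g :: "real^'n \<Rightarrow> real"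
  assumes sg: "smooth g"
  shows "partial_deriv j (partial_deriv i g) x = partial_deriv i (partial_deriv j g) x"
proof (rule ccontr)
  let ?A = "partial_deriv j (partial_deriv i g)" and ?B = "partial_deriv i (partial_deriv j g)"
  assume ne: "?A x \<noteq> ?B x"
  define e where "e = \<bar>?A x - ?B x\<bar> / 2"
  have "e > 0" using ne by (simp add: e_def)
  have cA: "isCont ?A x" and cB: "isCont ?B x"
    using smooth_cont[OF smooth_partial[OF smooth_partial[OF sg]]] by (auto simp: continuous_on_eq_continuous_at)
  obtain d1 where "d1 > 0" and d1: "\<And>y. dist y x < d1 \<Longrightarrow> dist (?A y) (?A x) < e"
    using cA \<open>e > 0\<close> unfolding continuous_at_eps_delta by blast
  obtain d2 where "d2 > 0" and d2: "\<And>y. dist y x < d2 \<Longrightarrow> dist (?B y) (?B x) < e"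
    using cB \<open>e > 0\<close> unfolding continuous_at_eps_delta by blast
  define h where "h = min d1 d2 / 4"
  have "h > 0" using \<open>d1 > 0\<close> \<open>d2 > 0\<close> by (simp add: h_def)
  obtain p where p: "norm (p - x) \<le> 2*h"
    "g (x + h *\<^sub>R axis j 1 + h *\<^sub>R axis i 1) - g (x + h *\<^sub>R axis i 1) - g (x + h *\<^sub>R axis j 1) + g x
      = h^2 * ?A p"
    using mixed_mvt[OF sg \<open>h > 0\<close>, of x j i] by blast
  obtain q where q: "norm (q - x) \<le> 2*h"
    "g (x + h *\<^sub>R axis i 1 + h *\<^sub>R axis j 1) - g (x + h *\<^sub>R axis j 1) - g (x + h *\<^sub>R axis i 1) + g x
      = h^2 * ?B q"
    using mixed_mvt[OF sg \<open>h > 0\<close>, of x i j] by blast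
  have "h^2 * ?A p = h^2 * ?B q" using p(2) q(2) by (simp add: algebra_simps)
  then have "?A p = ?B q" using \<open>h > 0\<close> by simp
  moreover have "dist (?A p) (?A x) < e"
    using d1 p(1) \<open>h > 0\<close> \<open>d1 > 0\<close> \<open>d2 > 0\<close> by (auto simp: dist_norm h_def)
  moreover have "dist (?B q) (?B x) < e"
    using d2 q(1) \<open>h > 0\<close> \<open>d1 > 0\<close> \<open>d2 > 0\<close> by (auto simp: dist_norm h_def)
  moreover have "\<And>a b c d::real. a = b \<Longrightarrow> \<bar>a - c\<bar> < \<bar>c - d\<bar> / 2 \<Longrightarrow> \<bar>b - d\<bar> < \<bar>c - d\<bar> / 2 \<Longrightarrow> False"
    by (smt (verit, best) field_sum_of_halves)
  ultimately show False unfolding dist_real_def e_def by blast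
qed

lemma partial_Dv_comm:
  assumes sg: "smooth g"
  shows "partial_deriv i (Dv u g) = Dv u (partial_deriv i g)"
proof -
  have "partial_deriv i (Dv u g) = (\<lambda>y. \<Sum>l\<in>UNIV. u$l * partial_deriv i (partial_deriv l g) y)"
    unfolding Dv_def by (rule smooth_sum_partial) (auto intro: smooth_partial sg)
  also have "\<dots> = Dv u (partial_deriv i g)"
    unfolding Dv_def using schwarz[OF sg, of i] by simp
  finally show ?thesis .
qed

lemma deriv_lemma:
  assumes "smooth g"
  shows "((\<lambda>s. (Dv (u + s *\<^sub>R axis i 1) ^^ k) g x) has_real_derivative
          (real k * (Dv u ^^ (k - 1)) (partial_deriv i g) x)) (at 0)"
  using assms
proof (induction k arbitrary: g)
  case 0 then show ?case by simp
next
  case (Suc k)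
  have sg: "smooth g" by (rule Suc.prems)
  have sD: "smooth (Dv u g)" and sP: "smooth (partial_deriv i g)"
    using Suc.prems by (auto intro: smooth_Dv smooth_partial)
  have eq: "(\<lambda>s. (Dv (u + s *\<^sub>R axis i 1) ^^ Suc k) g x) =
     (\<lambda>s. (Dv (u + s *\<^sub>R axis i 1) ^^ k) (Dv u g) x + s * (Dv (u + s *\<^sub>R axis i 1) ^^ k) (partial_deriv i g) x)"
  proof
    fix s
    have "(Dv (u + s *\<^sub>R axis i 1) ^^ Suc k) g = (Dv (u + s *\<^sub>R axis i 1) ^^ k) (Dv (u + s *\<^sub>R axis i 1) g)"
      by (simp only: funpow_Suc_right comp_def)
    also have "\<dots> = (Dv (u + s *\<^sub>R axis i 1) ^^ k) (\<lambda>y. Dv u g y + s * partial_deriv i g y)"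
      by (simp only: Dv_shift)
    also have "\<dots> = (\<lambda>y. (Dv (u + s *\<^sub>R axis i 1) ^^ k) (Dv u g) y + s * (Dv (u + s *\<^sub>R axis i 1) ^^ k) (partial_deriv i g) y)"
      by (rule Dv_pow_lin2[OF sD sP])
    finally show "(Dv (u + s *\<^sub>R axis i 1) ^^ Suc k) g x = (Dv (u + s *\<^sub>R axis i 1) ^^ k) (Dv u g) x + s * (Dv (u + s *\<^sub>R axis i 1) ^^ k) (partial_deriv i g) x"
      by simp
  qed
  note IH1 = Suc.IH[OF sD]
  note IH2 = Suc.IH[OF sP]
  have D2: "((\<lambda>s. s * (Dv (u + s *\<^sub>R axis i 1) ^^ k) (partial_deriv i g) x) has_real_derivative
      ((Dv u ^^ k) (partial_deriv i g) x)) (at 0)"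
    using DERIV_mult[OF DERIV_ident IH2] by simp
  have D: "((\<lambda>s. (Dv (u + s *\<^sub>R axis i 1) ^^ k) (Dv u g) x + s * (Dv (u + s *\<^sub>R axis i 1) ^^ k) (partial_deriv i g) x)
      has_real_derivative (real k * (Dv u ^^ (k - 1)) (partial_deriv i (Dv u g)) x + (Dv u ^^ k) (partial_deriv i g) x)) (at 0)"
    using DERIV_add[OF IH1 D2] by simp
  have val: "real k * (Dv u ^^ (k - 1)) (partial_deriv i (Dv u g)) x + (Dv u ^^ k) (partial_deriv i g) x
      = real (Suc k) * (Dv u ^^ (Suc k - 1)) (partial_deriv i g) x"
  proof (cases k)
    case 0 then show ?thesis by simp
  next
    case (Suc m)
    note km = this
    have "(Dv u ^^ m) (Dv u (partial_deriv i g)) = (Dv u ^^ Suc m) (partial_deriv i g)"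
      by (simp only: funpow_Suc_right comp_def)
    then show ?thesis using km by (simp add: partial_Dv_comm[OF sg] algebra_simps)
  qed
  show ?case unfolding eq val[symmetric] by (rule D)
qed

lemma rolle_flat:
  fixes \<phi> :: "nat \<Rightarrow> real \<Rightarrow> real"
  assumes der: "\<And>k t. (\<phi> k has_real_derivative \<phi> (Suc k) t) (at t)"
    and z: "\<And>\<epsilon>. \<epsilon> > 0 \<Longrightarrow> \<exists>t. 0 < t \<and> t < \<epsilon> \<and> \<phi> 0 t = 0"
  shows "\<phi> k 0 = 0"
proof -
  have Z: "\<forall>\<epsilon>>0. \<exists>t. 0 < t \<and> t < \<epsilon> \<and> \<phi> k t = 0" for k
  proof (induction k)
    case 0 then show ?case using z by blast
  next
    case (Suc k)
    show ?case
    proof (intro allI impI)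
      fix \<epsilon> :: real assume "\<epsilon> > 0"
      obtain t1 where t1: "0 < t1" "t1 < \<epsilon>" "\<phi> k t1 = 0" using Suc \<open>\<epsilon> > 0\<close> by blast
      obtain t2 where t2: "0 < t2" "t2 < t1" "\<phi> k t2 = 0" using Suc t1(1) by blast
      have "continuous_on {t2..t1} (\<phi> k)"
        using der by (intro continuous_at_imp_continuous_on ballI DERIV_isCont) blast
      moreover have "\<phi> k differentiable (at x)" for x
        using der real_differentiable_def by blast
      ultimately obtain c where c: "t2 < c" "c < t1" "DERIV (\<phi> k) c :> 0"
        using Rolle[of t2 t1 "\<phi> k"] t1 t2 by auto
      have "\<phi> (Suc k) c = 0" using DERIV_unique[OF der c(3)] .
      then show "\<exists>t. 0 < t \<and> t < \<epsilon> \<and> \<phi> (Suc k) t = 0"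
        using c t1 t2 by (intro exI[of _ c]) auto
    qed
  qed
  show ?thesis
  proof (rule ccontr)
    assume ne: "\<phi> k 0 \<noteq> 0"
    have "isCont (\<phi> k) 0" using der by (rule DERIV_isCont)
    then obtain d where "d > 0" and d: "\<And>x. dist x 0 < d \<Longrightarrow> dist (\<phi> k x) (\<phi> k 0) < \<bar>\<phi> k 0\<bar>"
      using ne unfolding continuous_at_eps_delta by (meson zero_less_abs_iff)
    obtain t where "0 < t" "t < d" "\<phi> k t = 0" using Z \<open>d > 0\<close> by blast
    then show False using d[of t] by (simp add: dist_real_def)
  qed
qed

lemma sphere_point:
  fixes u :: "real^'n"
  assumes "u$j > 0" "k \<ge> 1"
  shows "(2 * u$j / (real k * (norm u)^2)) *\<^sub>R u \<in> E_set j"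
proof -
  define t where "t = 2 * u$j / (real k * (norm u)^2)"
  have "u \<noteq> 0" using assms by auto
  then have nu: "(norm u)^2 > 0" by simp
  have kp: "real k > 0" using assms by simp
  have tt: "t * (norm u)^2 = 2 * u$j / real k" using nu kp by (simp add: t_def field_simps)
  have "(norm ((1 / real k) *\<^sub>R axis j 1 - t *\<^sub>R u))^2 =
      inner ((1 / real k) *\<^sub>R axis j 1 - t *\<^sub>R u) ((1 / real k) *\<^sub>R axis j 1 - t *\<^sub>R u)"
    by (rule power2_norm_eq_inner)
  also have "\<dots> = (1 / real k)^2 * inner (axis j 1) (axis j 1 :: real^'n) - 2 * t * (1 / real k) * inner (axis j 1) u + t * (t * inner u u)"
    by (simp add: inner_diff_left inner_diff_right inner_commute[of u "axis j 1"] power2_eq_square algebra_simps)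
  also have "\<dots> = (1 / real k)^2 - 2 * t * (1 / real k) * u$j + t * (t * (norm u)^2)"
    by (simp add: inner_axis' power2_norm_eq_inner)
  also have "\<dots> = (1 / real k)^2" unfolding tt by (simp add: algebra_simps)
  finally have sq: "(norm ((1 / real k) *\<^sub>R axis j 1 - t *\<^sub>R u))^2 = (1 / real k)^2" .
  have "norm ((1 / real k) *\<^sub>R axis j 1 - t *\<^sub>R u) = 1 / real k"
    using power2_eq_imp_eq[OF sq] kp by simp
  then have "t *\<^sub>R u \<in> sphere ((1 / real k) *\<^sub>R axis j 1) (1 / real k)"
    by (simp add: dist_norm)
  then show ?thesis unfolding E_set_def t_def using assms by blast
qed

lemma ray_zero:
  fixes f :: "real^'n \<Rightarrow> real"
  assumes sf: "smooth f" and fz: "\<forall>x\<in>E_set j. f x = 0" and uj: "u$j > 0"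
  shows "(Dv u ^^ k) f 0 = 0"
proof -
  define \<phi> where "\<phi> k t = (Dv u ^^ k) f (t *\<^sub>R u)" for k t
  have der: "(\<phi> k has_real_derivative \<phi> (Suc k) t) (at t)" for k t
    using chain_line[OF smooth_Dv_pow[OF sf, where v=u and k=k], where a=0 and v=u and t=t] by (simp add: \<phi>_def[abs_def])
  have z: "\<exists>t. 0 < t \<and> t < \<epsilon> \<and> \<phi> 0 t = 0" if "\<epsilon> > 0" for \<epsilon>
  proof -
    have "u \<noteq> 0" using uj by auto
    then have nu: "(norm u)^2 > 0" by simp
    obtain k :: nat where k: "2 * u$j / (\<epsilon> * (norm u)^2) < real k"
      using reals_Archimedean2 by blast
    define m where "m = max k 1"
    have m1: "m \<ge> 1" and km: "real k \<le> real m" by (auto simp: m_def)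
    define t where "t = 2 * u$j / (real m * (norm u)^2)"
    have "t > 0" using uj nu m1 by (simp add: t_def)
    moreover have "t < \<epsilon>"
    proof -
      have "2 * u$j / (\<epsilon> * (norm u)^2) < real m" using k km by linarith
      then have "2 * u$j < real m * (\<epsilon> * (norm u)^2)" using that nu by (simp add: field_simps)
      then show ?thesis using nu m1 by (simp add: t_def field_simps)
    qed
    moreover have "\<phi> 0 t = 0"
      using fz sphere_point[OF uj m1] by (simp add: \<phi>_def t_def)
    ultimately show ?thesis by blast
  qed
  show ?thesis using rolle_flat[of \<phi> k, OF der z] by (simp add: \<phi>_def)
qed

theorem corollary1:
  fixes f :: "real^'n \<Rightarrow> real" and j :: 'n
  assumes "CARD('n) \<ge> 3"
    and "smooth f"
    and "\<forall>x\<in>E_set j. f x = 0"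
  shows "\<forall>is. iter_partial is f 0 = 0"
proof
  fix "is"
  have Q: "smooth (iter_partial is f) \<and> (\<forall>u k. u$j > 0 \<longrightarrow> (Dv u ^^ k) (iter_partial is f) 0 = 0)"
  proof (induction "is")
    case Nil then show ?case using ray_zero[OF assms(2,3)] assms(2) by simp
  next
    case (Cons i "is")
    let ?g = "iter_partial is f"
    have sg: "smooth ?g" using Cons by blast
    have "(Dv u ^^ k) (partial_deriv i ?g) 0 = 0" if uj: "u$j > 0" for u k
    proof -
      have D: "((\<lambda>s. (Dv (u + s *\<^sub>R axis i 1) ^^ Suc k) ?g 0) has_real_derivative
          (real (Suc k) * (Dv u ^^ k) (partial_deriv i ?g) 0)) (at 0)"
        using deriv_lemma[OF sg, where u=u and i=i and k="Suc k" and x=0] by simp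
      have "\<forall>y. \<bar>0 - y\<bar> < u$j \<longrightarrow> (Dv (u + 0 *\<^sub>R axis i 1) ^^ Suc k) ?g 0 = (Dv (u + y *\<^sub>R axis i 1) ^^ Suc k) ?g 0"
      proof (intro allI impI)
        fix y :: real assume "\<bar>0 - y\<bar> < u$j"
        then have "(u + y *\<^sub>R axis i 1)$j > 0" by (auto simp: axis_def)
        then have "(Dv (u + y *\<^sub>R axis i 1) ^^ Suc k) ?g 0 = 0" using Cons by blast
        moreover have "(Dv (u + 0 *\<^sub>R axis i 1) ^^ Suc k) ?g 0 = 0"
        proof -
          have "u + 0 *\<^sub>R axis i 1 = u" by simp
          then show ?thesis using Cons uj by metis
        qed
        ultimately show "(Dv (u + 0 *\<^sub>R axis i 1) ^^ Suc k) ?g 0 = (Dv (u + y *\<^sub>R axis i 1) ^^ Suc k) ?g 0" by simp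
      qed
      then have "real (Suc k) * (Dv u ^^ k) (partial_deriv i ?g) 0 = 0"
        using DERIV_local_const[OF D uj] by blast
      then show ?thesis by simp
    qed
    then show ?case using smooth_partial[OF sg] by simp
  qed
  have "(axis j 1 :: real^'n) $ j > 0" by simp
  then show "iter_partial is f 0 = 0" using Q by (metis funpow_0)
qed

end
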